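(* For every $\theta,\bar\theta\in\mathbb R^m$ there exists a stochastic policy $\mu_{\theta,\bar\theta}$ such that \[ T_{\alpha,\eta}(\theta)-T_{\alpha,\eta}(\bar\theta)=A^\eta_{\mu_{\theta,\bar\theta}}(\theta-\bar\theta). \] In particular, suppose $\theta^\star_\eta$ satisfies $\Phi^\top D(R+\gamma PV_{\theta^\star_\eta}-\Phi\theta^\star_\eta)-\eta\theta^\star_\eta=0$, $\theta_{k+1}=T_{\alpha,\eta}(\theta_k)$, and $x_k:=\theta_k-\theta^\star_\eta$. Then $x_{k+1}=A^\eta_{\mu_k}x_k$ for all $k\ge0$, where each $\mu_k$ is a stochastic policy depending measurably on $(\theta_k,\theta^\star_\eta)$.
   Context: Consider a finite discounted MDP with state space $\mathcal S=\{1,\dots,|\mathcal S|\}$, action space $\mathcal A=\{1,\dots,|\mathcal A|\}$, transition probabilities $P(s'\mid s,a)$, expected reward $R(s,a)$, and discount factor $\gamma\in(0,1)$. State-action vectors are ordered as $(1,1),(2,1),\dots,(|\mathcal S|,1),(1,2),\dots$. The matrix $P$ has rows $P(\cdot\mid s,a)$, and $R$ has entries $R(s,a)$. A stochastic policy is a map $\mu:\mathcal S\to\Delta_{|\mathcal A|}$. The matrix $\Pi^\mu\in\mathbb R^{|\mathcal S|\times|\mathcal S||\mathcal A|}$ has entry $\mu(a\mid s)$ at row $s$, column $(s,a)$, and zeros elsewhere. The feature matrix $\Phi\in\mathbb R^{|\mathcal S||\mathcal A|\times m}$ has full column rank and rows $\phi(s,a)^\top$. Define $V_\theta(s)=\max_a\phi(s,a)^\top\theta$.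 The distribution $d>0$ on $\mathcal S\times\mathcal A$ gives $D=\mathrm{diag}(d)$. The step size is $\alpha\in(0,1)$ and the regularization weight is $\eta\ge0$. Define $T_{\alpha,\eta}(\theta):=\theta+\alpha[\Phi^\top D(R+\gamma PV_\theta-\Phi\theta)-\eta\theta]$ and \[ A^\eta_\mu:=I-\alpha(\Phi^\top D\Phi+\eta I)+\alpha\gamma\Phi^\top DP\Pi^\mu\Phi. \] *)

theory Defs
  imports "HOL-Analysis.Analysis"
begin

text \<open>States 's, actions 'a, features 'm are finite index types.
  State-action vectors are indexed by the product type 's \<times> 'a.\<close>

definition diag_mat :: "real ^ 'n \<Rightarrow> real ^ 'n ^ 'n" where
  "diag_mat d = (\<chi> i j. if i = j then d $ i else 0)"

definition is_stoch_policy :: "('s::finite \<Rightarrow> 'a::finite \<Rightarrow> real) \<Rightarrow> bool" where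
  "is_stoch_policy \<mu> \<longleftrightarrow> (\<forall>s a. 0 \<le> \<mu> s a) \<and> (\<forall>s. (\<Sum>a\<in>UNIV. \<mu> s a) = 1)"

definition Pi_mat :: "('s::finite \<Rightarrow> 'a::finite \<Rightarrow> real) \<Rightarrow> real ^ ('s \<times> 'a) ^ 's" where
  "Pi_mat \<mu> = (\<chi> s p. if fst p = s then \<mu> s (snd p) else 0)"

definition V_fun :: "real ^ 'm ^ ('s::finite \<times> 'a::finite) \<Rightarrow> real ^ 'm \<Rightarrow> real ^ 's" where
  "V_fun \<Phi> \<theta> = (\<chi> s. Max (range (\<lambda>a. (\<Phi> *v \<theta>) $ (s, a))))"

definition T_op :: "real ^ 'm ^ ('s::finite \<times> 'a::finite) \<Rightarrow> real ^ ('s \<times> 'a)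
    \<Rightarrow> real ^ ('s \<times> 'a) \<Rightarrow> real ^ 's ^ ('s \<times> 'a) \<Rightarrow> real \<Rightarrow> real \<Rightarrow> real
    \<Rightarrow> real ^ 'm \<Rightarrow> real ^ 'm" where
  "T_op \<Phi> d R P \<gamma> \<alpha> \<eta> \<theta> =
     \<theta> + \<alpha> *\<^sub>R (transpose \<Phi> *v (diag_mat d *v (R + \<gamma> *\<^sub>R (P *v V_fun \<Phi> \<theta>) - \<Phi> *v \<theta>))
                  - \<eta> *\<^sub>R \<theta>)"

definition A_mat :: "real ^ 'm ^ ('s::finite \<times> 'a::finite) \<Rightarrow> real ^ ('s \<times> 'a)
    \<Rightarrow> real ^ 's ^ ('s \<times> 'a) \<Rightarrow> real \<Rightarrow> real \<Rightarrow> real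
    \<Rightarrow> ('s \<Rightarrow> 'a \<Rightarrow> real) \<Rightarrow> real ^ 'm ^ 'm" where
  "A_mat \<Phi> d P \<gamma> \<alpha> \<eta> \<mu> =
     mat 1 - \<alpha> *\<^sub>R (transpose \<Phi> ** diag_mat d ** \<Phi> + \<eta> *\<^sub>R mat 1)
       + (\<alpha> * \<gamma>) *\<^sub>R (transpose \<Phi> ** diag_mat d ** P ** Pi_mat \<mu> ** \<Phi>)"

end

theory Submission imports Defs begin

definition wts :: "('a::finite \<Rightarrow> real) \<Rightarrow> ('a \<Rightarrow> real) \<Rightarrow> 'a \<Rightarrow> real" where
  "wts f g a =
    ((Max (range f) - Max (range g) - Min (range (\<lambda>b. f b - g b)))
       / (Max (range (\<lambda>b. f b - g b)) - Min (range (\<lambda>b. f b - g b))))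
     * (if f a - g a = Max (range (\<lambda>b. f b - g b)) then 1 else 0)
     / (\<Sum>b\<in>UNIV. if f b - g b = Max (range (\<lambda>b. f b - g b)) then 1 else 0)
   + (1 - (Max (range f) - Max (range g) - Min (range (\<lambda>b. f b - g b)))
       / (Max (range (\<lambda>b. f b - g b)) - Min (range (\<lambda>b. f b - g b))))
     * (if f a - g a = Min (range (\<lambda>b. f b - g b)) then 1 else 0)
     / (\<Sum>b\<in>UNIV. if f b - g b = Min (range (\<lambda>b. f b - g b)) then 1 else 0)"

lemma ind_sum:
  fixes hh :: "'a::finite \<Rightarrow> real"
  assumes "hh b0 = c"
  shows "(\<Sum>b\<in>UNIV. if hh b = c then 1 else 0) > (0::real)"
    "(\<Sum>a\<in>UNIV. (if hh a = c then 1 else 0) / (\<Sum>b\<in>UNIV. if hh b = c then 1 else (0::real))) = 1"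
    "(\<Sum>a\<in>UNIV. (if hh a = c then 1 else 0) / (\<Sum>b\<in>UNIV. if hh b = c then 1 else (0::real)) * hh a) = c"
proof -
  have "(\<Sum>b\<in>UNIV. if hh b = c then 1 else (0::real)) \<ge> (if hh b0 = c then 1 else 0)"
    by (rule member_le_sum) auto
  then show pos: "(\<Sum>b\<in>UNIV. if hh b = c then 1 else 0) > (0::real)" using assms by simp
  show "(\<Sum>a\<in>UNIV. (if hh a = c then 1 else 0) / (\<Sum>b\<in>UNIV. if hh b = c then 1 else (0::real))) = 1"
    using pos by (simp add: sum_divide_distrib[symmetric])
  have "(\<Sum>a\<in>UNIV. (if hh a = c then 1 else 0) / (\<Sum>b\<in>UNIV. if hh b = c then 1 else (0::real)) * hh a)
     = (\<Sum>a\<in>UNIV. (if hh a = c then 1 else 0) / (\<Sum>b\<in>UNIV. if hh b = c then 1 else (0::real)) * c)"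
    by (rule sum.cong) auto
  also have "\<dots> = c" using pos by (simp add: sum_distrib_right[symmetric] sum_divide_distrib[symmetric])
  finally show "(\<Sum>a\<in>UNIV. (if hh a = c then 1 else 0) / (\<Sum>b\<in>UNIV. if hh b = c then 1 else (0::real)) * hh a) = c" .
qed

lemma wts_props:
  fixes f g :: "'a::finite \<Rightarrow> real"
  shows "\<forall>a. 0 \<le> wts f g a" "(\<Sum>a\<in>UNIV. wts f g a) = 1"
    "(\<Sum>a\<in>UNIV. wts f g a * (f a - g a)) = Max (range f) - Max (range g)"
proof -
  define hh where "hh = (\<lambda>b. f b - g b)"
  define U where "U = Max (range hh)"
  define L where "L = Min (range hh)"
  define Dl where "Dl = Max (range f) - Max (range g)"
  define lam where "lam = (Dl - L) / (U - L)"
  define SU where "SU = (\<Sum>b\<in>UNIV. if hh b = U then 1 else (0::real))"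
  define SL where "SL = (\<Sum>b\<in>UNIV. if hh b = L then 1 else (0::real))"
  have w: "wts f g a = lam * (if hh a = U then 1 else 0) / SU + (1 - lam) * (if hh a = L then 1 else 0) / SL" for a
    unfolding wts_def hh_def U_def L_def Dl_def lam_def SU_def SL_def by (rule refl)
  have "U \<in> range hh" unfolding U_def by (rule Max_in) auto
  then obtain bU where bU0: "U = hh bU" by (rule rangeE)
  note bU = bU0[symmetric]
  have "L \<in> range hh" unfolding L_def by (rule Min_in) auto
  then obtain bL where bL0: "L = hh bL" by (rule rangeE)
  note bL = bL0[symmetric]
  have "Max (range f) \<in> range f" by (rule Max_in) auto
  then obtain a1 where a10: "Max (range f) = f a1" by (rule rangeE)
  note a1 = a10[symmetric]
  have "Max (range g) \<in> range g" by (rule Max_in) auto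
  then obtain a2 where a20: "Max (range g) = g a2" by (rule rangeE)
  note a2 = a20[symmetric]
  have g1: "g a1 \<le> Max (range g)" by (simp add: Max_ge)
  have h1: "f a1 - g a1 \<le> U" unfolding U_def hh_def by (rule Max_ge) auto
  have DU: "Dl \<le> U" unfolding Dl_def using a1 g1 h1 by linarith
  have f2: "f a2 \<le> Max (range f)" by (simp add: Max_ge)
  have h2: "L \<le> f a2 - g a2" unfolding L_def hh_def by (rule Min_le) auto
  have DL: "L \<le> Dl" unfolding Dl_def using a2 f2 h2 by linarith
  have lam01: "0 \<le> lam \<and> lam \<le> 1"
  proof (cases "U = L")
    case True then show ?thesis by (simp add: lam_def)
  next
    case False then have "U > L" using DU DL by simp
    then show ?thesis using DU DL by (simp add: lam_def divide_simps)
  qed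
  have SU: "SU > 0" "(\<Sum>a\<in>UNIV. (if hh a = U then 1 else 0) / SU) = 1"
      "(\<Sum>a\<in>UNIV. (if hh a = U then 1 else 0) / SU * hh a) = U"
    using ind_sum[of hh bU U, OF bU] unfolding SU_def by auto
  have SL: "SL > 0" "(\<Sum>a\<in>UNIV. (if hh a = L then 1 else 0) / SL) = 1"
      "(\<Sum>a\<in>UNIV. (if hh a = L then 1 else 0) / SL * hh a) = L"
    using ind_sum[of hh bL L, OF bL] unfolding SL_def by auto
  show "\<forall>a. 0 \<le> wts f g a" unfolding w using lam01 SU(1) SL(1) by auto
  have "(\<Sum>a\<in>UNIV. wts f g a) = lam * (\<Sum>a\<in>UNIV. (if hh a = U then 1 else 0) / SU)
     + (1 - lam) * (\<Sum>a\<in>UNIV. (if hh a = L then 1 else 0) / SL)"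
    unfolding w by (simp add: sum.distrib sum_distrib_left)
  then show "(\<Sum>a\<in>UNIV. wts f g a) = 1" using SU SL by simp
  have "(\<Sum>a\<in>UNIV. wts f g a * (f a - g a)) = lam * (\<Sum>a\<in>UNIV. (if hh a = U then 1 else 0) / SU * hh a)
     + (1 - lam) * (\<Sum>a\<in>UNIV. (if hh a = L then 1 else 0) / SL * hh a)"
  proof -
    have "(\<Sum>a\<in>UNIV. wts f g a * (f a - g a)) = (\<Sum>a\<in>UNIV. lam * ((if hh a = U then 1 else 0) / SU * hh a)
       + (1 - lam) * ((if hh a = L then 1 else 0) / SL * hh a))"
      unfolding w by (intro sum.cong refl) (simp add: hh_def algebra_simps)
    then show ?thesis by (simp add: sum.distrib sum_distrib_left)
  qed
  also have "\<dots> = lam * U + (1 - lam) * L" using SU SL by simp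
  also have "\<dots> = Dl"
  proof (cases "U = L")
    case True then show ?thesis using DU DL by (simp add: algebra_simps)
  next
    case False then have "U - L \<noteq> 0" by simp
    then have "lam * (U - L) = Dl - L" by (simp add: lam_def)
    then show ?thesis by (simp add: algebra_simps)
  qed
  finally show "(\<Sum>a\<in>UNIV. wts f g a * (f a - g a)) = Max (range f) - Max (range g)"
    unfolding Dl_def .
qed


lemma wts_meas:
  fixes F G :: "'a::finite \<Rightarrow> 'x \<Rightarrow> real"
  assumes [measurable]: "\<And>a. F a \<in> borel_measurable N" "\<And>a. G a \<in> borel_measurable N"
  shows "(\<lambda>x. wts (\<lambda>a. F a x) (\<lambda>a. G a x) b) \<in> borel_measurable N"
  unfolding wts_def by measurable

lemma Pi_Phi:
  fixes \<Phi> :: "real ^ 'm::finite ^ ('s::finite \<times> 'a::finite)"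
  shows "(Pi_mat \<mu> *v v) $ s = (\<Sum>a\<in>UNIV. \<mu> s a * v $ (s, a))"
proof -
  have "(Pi_mat \<mu> *v v) $ s = (\<Sum>p\<in>UNIV. (if fst p = s then \<mu> s (snd p) else 0) * v $ p)"
    by (simp add: Pi_mat_def matrix_vector_mult_def)
  also have "\<dots> = (\<Sum>(s',a)\<in>UNIV \<times> UNIV. (if s' = s then \<mu> s a else 0) * v $ (s', a))"
    by (simp add: UNIV_Times_UNIV case_prod_beta)
  also have "\<dots> = (\<Sum>s'\<in>UNIV. \<Sum>a\<in>UNIV. (if s' = s then \<mu> s a else 0) * v $ (s', a))"
    by (rule sum.cartesian_product[symmetric])
  also have "\<dots> = (\<Sum>a\<in>UNIV. \<mu> s a * v $ (s, a))"
  proof -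
    have "\<And>s'. (\<Sum>a\<in>UNIV. (if s' = s then \<mu> s a else 0) * v $ (s', a))
       = (if s' = s then (\<Sum>a\<in>UNIV. \<mu> s a * v $ (s, a)) else 0)" by auto
    then show ?thesis by simp
  qed
  finally show ?thesis .
qed


lemma T_diff:
  fixes P :: "real ^ 's::finite ^ ('s \<times> 'a::finite)"
    and \<Phi> :: "real ^ 'm::finite ^ ('s \<times> 'a)"
  assumes "Pi_mat \<mu> *v (\<Phi> *v (\<theta> - \<theta>')) = V_fun \<Phi> \<theta> - V_fun \<Phi> \<theta>'"
  shows "T_op \<Phi> d R P \<gamma> \<alpha> \<eta> \<theta> - T_op \<Phi> d R P \<gamma> \<alpha> \<eta> \<theta>'
          = A_mat \<Phi> d P \<gamma> \<alpha> \<eta> \<mu> *v (\<theta> - \<theta>')"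
proof -
  define z where "z = \<theta> - \<theta>'"
  have A: "A_mat \<Phi> d P \<gamma> \<alpha> \<eta> \<mu> *v z = z - \<alpha> *\<^sub>R (transpose \<Phi> *v (diag_mat d *v (\<Phi> *v z)) + \<eta> *\<^sub>R z)
     + (\<alpha> * \<gamma>) *\<^sub>R (transpose \<Phi> *v (diag_mat d *v (P *v (Pi_mat \<mu> *v (\<Phi> *v z)))))"
    unfolding A_mat_def
    by (simp only: matrix_vector_mult_add_rdistrib matrix_vector_mult_diff_rdistrib
        scaleR_matrix_vector_assoc[symmetric] matrix_vector_mul_assoc[symmetric] matrix_vector_mul_lid)
  have "T_op \<Phi> d R P \<gamma> \<alpha> \<eta> \<theta> - T_op \<Phi> d R P \<gamma> \<alpha> \<eta> \<theta>'
     = z - \<alpha> *\<^sub>R (transpose \<Phi> *v (diag_mat d *v (\<Phi> *v z)) + \<eta> *\<^sub>R z)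
     + (\<alpha> * \<gamma>) *\<^sub>R (transpose \<Phi> *v (diag_mat d *v (P *v (V_fun \<Phi> \<theta> - V_fun \<Phi> \<theta>'))))"
    unfolding T_op_def z_def
    by (simp only: matrix_vector_mult_diff_distrib matrix_vector_right_distrib matrix_vector_mult_scaleR scaleR_scaleR algebra_simps)
  then show ?thesis using A assms unfolding z_def by simp
qed

theorem proposition4:
  fixes P :: "real ^ 's::finite ^ ('s \<times> 'a::finite)"
    and R :: "real ^ ('s \<times> 'a)"
    and \<Phi> :: "real ^ 'm::finite ^ ('s \<times> 'a)"
    and d :: "real ^ ('s \<times> 'a)"
    and \<gamma> \<alpha> \<eta> :: real
  assumes P_nonneg: "\<forall>p s'. 0 \<le> P $ p $ s'"
    and P_rows: "\<forall>p. (\<Sum>s'\<in>UNIV. P $ p $ s') = 1"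
    and gamma: "0 < \<gamma>" "\<gamma> < 1"
    and rank_Phi: "rank \<Phi> = CARD('m)"
    and d_pos: "\<forall>p. 0 < d $ p"
    and alpha: "0 < \<alpha>" "\<alpha> < 1"
    and eta: "0 \<le> \<eta>"
  shows "\<exists>M :: real ^ 'm \<Rightarrow> real ^ 'm \<Rightarrow> ('s \<Rightarrow> 'a \<Rightarrow> real).
     (\<forall>\<theta> \<theta>'. is_stoch_policy (M \<theta> \<theta>') \<and>
        T_op \<Phi> d R P \<gamma> \<alpha> \<eta> \<theta> - T_op \<Phi> d R P \<gamma> \<alpha> \<eta> \<theta>'
          = A_mat \<Phi> d P \<gamma> \<alpha> \<eta> (M \<theta> \<theta>') *v (\<theta> - \<theta>'))
   \<and> (\<forall>s a. (\<lambda>q. M (fst q) (snd q) s a) \<in> borel_measurable borel)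
   \<and> (\<forall>\<theta>star \<theta>seq :: nat \<Rightarrow> real ^ 'm.
        transpose \<Phi> *v (diag_mat d *v (R + \<gamma> *\<^sub>R (P *v V_fun \<Phi> \<theta>star) - \<Phi> *v \<theta>star))
          - \<eta> *\<^sub>R \<theta>star = 0
        \<and> (\<forall>k. \<theta>seq (Suc k) = T_op \<Phi> d R P \<gamma> \<alpha> \<eta> (\<theta>seq k))
        \<longrightarrow> (\<forall>k. \<theta>seq (Suc k) - \<theta>star
               = A_mat \<Phi> d P \<gamma> \<alpha> \<eta> (M (\<theta>seq k) \<theta>star) *v (\<theta>seq k - \<theta>star)))"
proof -
  define M :: "real ^ 'm \<Rightarrow> real ^ 'm \<Rightarrow> ('s \<Rightarrow> 'a \<Rightarrow> real)" where
    "M = (\<lambda>\<theta> \<theta>' s a. wts (\<lambda>a. (\<Phi> *v \<theta>) $ (s, a)) (\<lambda>a. (\<Phi> *v \<theta>') $ (s, a)) a)"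
  have pol: "is_stoch_policy (M \<theta> \<theta>')" for \<theta> \<theta>'
    unfolding is_stoch_policy_def M_def using wts_props(1,2) by blast
  have PiV: "Pi_mat (M \<theta> \<theta>') *v (\<Phi> *v (\<theta> - \<theta>')) = V_fun \<Phi> \<theta> - V_fun \<Phi> \<theta>'" for \<theta> \<theta>'
  proof (rule vec_eq_iff[THEN iffD2], rule allI)
    fix s
    have "(Pi_mat (M \<theta> \<theta>') *v (\<Phi> *v (\<theta> - \<theta>'))) $ s
       = (\<Sum>a\<in>UNIV. M \<theta> \<theta>' s a * ((\<Phi> *v \<theta>) $ (s, a) - (\<Phi> *v \<theta>') $ (s, a)))"
      by (simp add: Pi_Phi matrix_vector_mult_diff_distrib right_diff_distrib sum_subtractf)
    also have "\<dots> = Max (range (\<lambda>a. (\<Phi> *v \<theta>) $ (s, a))) - Max (range (\<lambda>a. (\<Phi> *v \<theta>') $ (s, a)))"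
      unfolding M_def by (rule wts_props(3))
    finally show "(Pi_mat (M \<theta> \<theta>') *v (\<Phi> *v (\<theta> - \<theta>'))) $ s = (V_fun \<Phi> \<theta> - V_fun \<Phi> \<theta>') $ s"
      by (simp add: V_fun_def)
  qed
  have diff: "T_op \<Phi> d R P \<gamma> \<alpha> \<eta> \<theta> - T_op \<Phi> d R P \<gamma> \<alpha> \<eta> \<theta>'
          = A_mat \<Phi> d P \<gamma> \<alpha> \<eta> (M \<theta> \<theta>') *v (\<theta> - \<theta>')" for \<theta> \<theta>'
    by (rule T_diff[OF PiV])
  have meas: "(\<lambda>q. M (fst q) (snd q) s a) \<in> borel_measurable borel" for s a
  proof -
    have c: "(\<lambda>q::(real^'m) \<times> (real^'m). (\<Phi> *v fst q) $ i) \<in> borel_measurable borel"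
       "(\<lambda>q::(real^'m) \<times> (real^'m). (\<Phi> *v snd q) $ i) \<in> borel_measurable borel" for i
      by (rule borel_measurable_continuous_onI,
          intro continuous_intros linear_continuous_on bounded_linear_compose[OF matrix_vector_mul_bounded_linear]
            bounded_linear_fst bounded_linear_snd bounded_linear_vec_nth)+
    show ?thesis unfolding M_def
      by (rule wts_meas[where F="\<lambda>a q. (\<Phi> *v fst q) $ (s, a)" and G="\<lambda>a q. (\<Phi> *v snd q) $ (s, a)", simplified])
        (rule c)+
  qed
  have fix_pt: "T_op \<Phi> d R P \<gamma> \<alpha> \<eta> \<theta>star = \<theta>star"
    if "transpose \<Phi> *v (diag_mat d *v (R + \<gamma> *\<^sub>R (P *v V_fun \<Phi> \<theta>star) - \<Phi> *v \<theta>star))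
          - \<eta> *\<^sub>R \<theta>star = 0" for \<theta>star
    using that unfolding T_op_def by simp
  show ?thesis
  proof (intro exI[of _ M] conjI allI impI)
    fix \<theta> \<theta>' show "is_stoch_policy (M \<theta> \<theta>')" by (rule pol)
    show "T_op \<Phi> d R P \<gamma> \<alpha> \<eta> \<theta> - T_op \<Phi> d R P \<gamma> \<alpha> \<eta> \<theta>'
          = A_mat \<Phi> d P \<gamma> \<alpha> \<eta> (M \<theta> \<theta>') *v (\<theta> - \<theta>')" by (rule diff)
  next
    fix s a show "(\<lambda>q. M (fst q) (snd q) s a) \<in> borel_measurable borel" by (rule meas)
  next
    fix \<theta>star and \<theta>seq :: "nat \<Rightarrow> real ^ 'm" and k
    assume h: "transpose \<Phi> *v (diag_mat d *v (R + \<gamma> *\<^sub>R (P *v V_fun \<Phi> \<theta>star) - \<Phi> *v \<theta>star))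
          - \<eta> *\<^sub>R \<theta>star = 0 \<and> (\<forall>k. \<theta>seq (Suc k) = T_op \<Phi> d R P \<gamma> \<alpha> \<eta> (\<theta>seq k))"
    then have "\<theta>seq (Suc k) - \<theta>star = T_op \<Phi> d R P \<gamma> \<alpha> \<eta> (\<theta>seq k) - T_op \<Phi> d R P \<gamma> \<alpha> \<eta> \<theta>star"
      using fix_pt by simp
    then show "\<theta>seq (Suc k) - \<theta>star = A_mat \<Phi> d P \<gamma> \<alpha> \<eta> (M (\<theta>seq k) \<theta>star) *v (\<theta>seq k - \<theta>star)"
      using diff by simp
  qed
qed

end
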